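(* The linear span $G^{00}$ of all operators $\bar\Xi^{\lambda_1}_{\lambda_1}\otimes f^{\dot I}_{\dot I}\otimes\Xi^{\lambda_2}_{\lambda_2}$, $\bar\Xi^{\lambda}_{\lambda}\otimes l^{\dot I}_{\dot I}$, $r^{\dot I}_{\dot I}\otimes\Xi^{\lambda}_{\lambda}$ and $\sigma^{\dot I}_{\dot I}$ ($\dot I$ any sequence, $\lambda,\lambda_1,\lambda_2\in\{1,\dots,\Lambda_F\}$) is a Cartan subalgebra of $\hat{G}_{\Lambda,\Lambda_F}$, i.e. a nilpotent subalgebra equal to its own normalizer in $\hat{G}_{\Lambda,\Lambda_F}$ (and these spanning operators are linearly dependent).
   Context: Fix positive integers $\Lambda,\Lambda_F$. A sequence $\dot I=i_1\cdots i_a$ is a finite, possibly empty, sequence of integers in $\{1,\dots,\Lambda\}$; juxtaposition denotes concatenation and $\delta^{\dot I}_{\dot J}$ is $1$ if $\dot I=\dot J$ and $0$ otherwise (similarly for integers). Let $\mathcal{T}_o$ be the complex vector space with basis the symbols $\bar\phi^{\lambda_1}\otimes s^{\dot K}\otimes\phi^{\lambda_2}$, $1\le\lambda_1,\lambda_2\le\Lambda_F$, $\dot K$ any sequence. For all sequences $\dot I,\dot J$ and all $\lambda_i\in\{1,\dots,\Lambda_F\}$ define linear operators on $\mathcal{T}_o$ (each written as a single symbol): first kind: $\bar\Xi^{\lambda_1}_{\lambda_2}\otimes f^{\dot I}_{\dot J}\otimes\Xi^{\lambda_3}_{\lambda_4}(\bar\phi^{\lambda_5}\otimes s^{\dot K}\otimes\phi^{\lambda_6})=\delta^{\lambda_5}_{\lambda_2}\delta^{\dot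 K}_{\dot J}\delta^{\lambda_6}_{\lambda_4}\,\bar\phi^{\lambda_1}\otimes s^{\dot I}\otimes\phi^{\lambda_3}$; second kind: $\bar\Xi^{\lambda_1}_{\lambda_2}\otimes l^{\dot I}_{\dot J}(\bar\phi^{\lambda_3}\otimes s^{\dot K}\otimes\phi^{\lambda_4})=\delta^{\lambda_3}_{\lambda_2}\sum_{\dot K_1\dot K_2=\dot K}\delta^{\dot K_1}_{\dot J}\,\bar\phi^{\lambda_1}\otimes s^{\dot I\dot K_2}\otimes\phi^{\lambda_4}$; third kind: $r^{\dot I}_{\dot J}\otimes\Xi^{\lambda_1}_{\lambda_2}(\bar\phi^{\lambda_3}\otimes s^{\dot K}\otimes\phi^{\lambda_4})=\delta^{\lambda_4}_{\lambda_2}\sum_{\dot K_1\dot K_2=\dot K}\delta^{\dot K_2}_{\dot J}\,\bar\phi^{\lambda_3}\otimes s^{\dot K_1\dot I}\otimes\phi^{\lambda_1}$; fourth kind: $\sigma^{\dot I}_{\dot J}(\bar\phi^{\lambda_1}\otimes s^{\dot K}\otimes\phi^{\lambda_2})=\sum_{\dot K_1\dot K_2\dot K_3=\dot K}\delta^{\dot K_2}_{\dot J}\,\bar\phi^{\lambda_1}\otimes s^{\dot K_1\dot I\dot K_3}\otimes\phi^{\lambda_2}$; sums run over all ways to write $\dot K$ as a concatenation of possibly empty sequences. The open string algebra $\hat{G}_{\Lambda,\Lambda_F}$ is the complex Lie algebra (commutator bracket) of operators on $\mathcal{T}_o$ spanned by all operators of these four kinds. *)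

theory Defs
  imports Complex_Main "HOL-Library.Poly_Mapping"
begin

(* Basis symbols  phibar^l1 (x) s^K (x) phi^l2  are triples (l1, K, l2);
   sequences are nat lists. *)
type_synonym bas = "nat \<times> nat list \<times> nat"
type_synonym vec = "bas \<Rightarrow>\<^sub>0 complex"
type_synonym oper = "vec \<Rightarrow> vec"

definition isseq :: "nat \<Rightarrow> nat list \<Rightarrow> bool" where
  "isseq L I \<longleftrightarrow> set I \<subseteq> {1..L}"

definition Basis :: "nat \<Rightarrow> nat \<Rightarrow> bas set" where
  "Basis L LF = {(a, K, b). a \<in> {1..LF} \<and> b \<in> {1..LF} \<and> isseq L K}"

definition ev :: "bas \<Rightarrow> vec" where
  "ev b = Poly_Mapping.single b 1"

definition cmul :: "complex \<Rightarrow> vec \<Rightarrow> vec" where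
  "cmul c v = Poly_Mapping.map (\<lambda>x. c * x) v"

(* linear extension of a map given on basis symbols; vectors supported outside
   the genuine basis (only possible in the ambient type) are sent to 0 *)
definition lin_ext :: "nat \<Rightarrow> nat \<Rightarrow> (bas \<Rightarrow> vec) \<Rightarrow> oper" where
  "lin_ext L LF f = (\<lambda>v. \<Sum>b\<in>Poly_Mapping.keys v. cmul (Poly_Mapping.lookup v b) (if b \<in> Basis L LF then f b else 0))"

(* first kind: Xibar^l1_l2 (x) f^I_J (x) Xi^l3_l4 *)
definition opF :: "nat \<Rightarrow> nat \<Rightarrow> nat \<Rightarrow> nat \<Rightarrow> nat list \<Rightarrow> nat list \<Rightarrow> nat \<Rightarrow> nat \<Rightarrow> oper" where
  "opF L LF l1 l2 I J l3 l4 = lin_ext L LF (\<lambda>(l5, K, l6).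
     if l5 = l2 \<and> K = J \<and> l6 = l4 then ev (l1, I, l3) else 0)"

(* second kind: Xibar^l1_l2 (x) l^I_J *)
definition opL :: "nat \<Rightarrow> nat \<Rightarrow> nat \<Rightarrow> nat \<Rightarrow> nat list \<Rightarrow> nat list \<Rightarrow> oper" where
  "opL L LF l1 l2 I J = lin_ext L LF (\<lambda>(l3, K, l4).
     if l3 = l2 then (\<Sum>(K1, K2)\<in>{(K1, K2). K1 @ K2 = K}. if K1 = J then ev (l1, I @ K2, l4) else 0)
     else 0)"

(* third kind: r^I_J (x) Xi^l1_l2 *)
definition opR :: "nat \<Rightarrow> nat \<Rightarrow> nat list \<Rightarrow> nat list \<Rightarrow> nat \<Rightarrow> nat \<Rightarrow> oper" where
  "opR L LF I J l1 l2 = lin_ext L LF (\<lambda>(l3, K, l4).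
     if l4 = l2 then (\<Sum>(K1, K2)\<in>{(K1, K2). K1 @ K2 = K}. if K2 = J then ev (l3, K1 @ I, l1) else 0)
     else 0)"

(* fourth kind: sigma^I_J *)
definition opS :: "nat \<Rightarrow> nat \<Rightarrow> nat list \<Rightarrow> nat list \<Rightarrow> oper" where
  "opS L LF I J = lin_ext L LF (\<lambda>(l1, K, l2).
     (\<Sum>(K1, K2, K3)\<in>{(K1, K2, K3). K1 @ K2 @ K3 = K}. if K2 = J then ev (l1, K1 @ I @ K3, l2) else 0))"

definition gens :: "nat \<Rightarrow> nat \<Rightarrow> oper set" where
  "gens L LF =
     {opF L LF l1 l2 I J l3 l4 | l1 l2 l3 l4 I J.
        l1 \<in> {1..LF} \<and> l2 \<in> {1..LF} \<and> l3 \<in> {1..LF} \<and> l4 \<in> {1..LF} \<and> isseq L I \<and> isseq L J}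
   \<union> {opL L LF l1 l2 I J | l1 l2 I J. l1 \<in> {1..LF} \<and> l2 \<in> {1..LF} \<and> isseq L I \<and> isseq L J}
   \<union> {opR L LF I J l1 l2 | l1 l2 I J. l1 \<in> {1..LF} \<and> l2 \<in> {1..LF} \<and> isseq L I \<and> isseq L J}
   \<union> {opS L LF I J | I J. isseq L I \<and> isseq L J}"

definition gens00 :: "nat \<Rightarrow> nat \<Rightarrow> oper set" where
  "gens00 L LF =
     {opF L LF l1 l1 I I l2 l2 | l1 l2 I. l1 \<in> {1..LF} \<and> l2 \<in> {1..LF} \<and> isseq L I}
   \<union> {opL L LF l l I I | l I. l \<in> {1..LF} \<and> isseq L I}
   \<union> {opR L LF I I l l | l I. l \<in> {1..LF} \<and> isseq L I}
   \<union> {opS L LF I I | I. isseq L I}"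

definition cspan :: "oper set \<Rightarrow> oper set" where
  "cspan S = {A. \<exists>F c. finite F \<and> F \<subseteq> S \<and> A = (\<lambda>v. \<Sum>g\<in>F. cmul (c g) (g v))}"

definition lin_dependent :: "oper set \<Rightarrow> bool" where
  "lin_dependent S \<longleftrightarrow> (\<exists>F c. finite F \<and> F \<subseteq> S \<and> (\<exists>g\<in>F. c g \<noteq> 0) \<and>
      (\<lambda>v. \<Sum>g\<in>F. cmul (c g) (g v)) = (\<lambda>v. 0))"

definition br :: "oper \<Rightarrow> oper \<Rightarrow> oper" where
  "br A B = (\<lambda>v. A (B v) - B (A v))"

definition Ghat :: "nat \<Rightarrow> nat \<Rightarrow> oper set" where
  "Ghat L LF = cspan (gens L LF)"

definition G00 :: "nat \<Rightarrow> nat \<Rightarrow> oper set" where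
  "G00 L LF = cspan (gens00 L LF)"

fun lcs :: "oper set \<Rightarrow> nat \<Rightarrow> oper set" where
  "lcs H 0 = H"
| "lcs H (Suc n) = cspan {br x y | x y. x \<in> H \<and> y \<in> lcs H n}"

definition lie_nilpotent :: "oper set \<Rightarrow> bool" where
  "lie_nilpotent H \<longleftrightarrow> (\<exists>n. lcs H n = {(\<lambda>v. 0)})"

definition normalizer :: "oper set \<Rightarrow> oper set \<Rightarrow> oper set" where
  "normalizer G H = {x \<in> G. \<forall>h\<in>H. br x h \<in> H}"

end

theory Submission
  imports Defs
begin

lemma lookup_cmul[simp]: "Poly_Mapping.lookup (cmul c v) x = c * Poly_Mapping.lookup v x"
  unfolding cmul_def by (simp add: Poly_Mapping.map.rep_eq when_def)

lemma lookup_ev: "Poly_Mapping.lookup (ev b) x = (if x = b then 1 else 0)"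
  unfolding ev_def by (simp add: Poly_Mapping.lookup_single when_def)

lemma keys_ev[simp]: "Poly_Mapping.keys (ev b) = {b}"
  unfolding ev_def by simp

lemma cmul_one[simp]: "cmul 1 v = v"
  by (rule poly_mapping_eqI) simp

lemma cmul_zero[simp]: "cmul c 0 = 0"
  by (rule poly_mapping_eqI) simp

definition M :: "oper \<Rightarrow> bas \<Rightarrow> bas \<Rightarrow> complex" where
  "M A b' b = Poly_Mapping.lookup (A (ev b)) b'"

definition good :: "nat \<Rightarrow> nat \<Rightarrow> oper \<Rightarrow> bool" where
  "good L LF A \<longleftrightarrow> (\<forall>v b'. Poly_Mapping.lookup (A v) b' = (\<Sum>b\<in>Poly_Mapping.keys v. Poly_Mapping.lookup v b * M A b' b))
     \<and> (\<forall>b b'. b \<notin> Basis L LF \<longrightarrow> M A b' b = 0)"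

definition diag :: "oper \<Rightarrow> bool" where
  "diag A \<longleftrightarrow> (\<forall>b b'. b' \<noteq> b \<longrightarrow> M A b' b = 0)"

definition comb :: "oper set \<Rightarrow> (oper \<Rightarrow> complex) \<Rightarrow> oper" where
  "comb F c = (\<lambda>v. \<Sum>g\<in>F. cmul (c g) (g v))"

lemma goodD1: "good L LF A \<Longrightarrow> Poly_Mapping.lookup (A v) b' = (\<Sum>b\<in>Poly_Mapping.keys v. Poly_Mapping.lookup v b * M A b' b)"
  unfolding good_def by blast

lemma goodD2: "good L LF A \<Longrightarrow> b \<notin> Basis L LF \<Longrightarrow> M A b' b = 0"
  unfolding good_def by blast

lemma diagD: "diag A \<Longrightarrow> b' \<noteq> b \<Longrightarrow> M A b' b = 0"
  unfolding diag_def by blast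

lemma cspan_iff: "A \<in> cspan S \<longleftrightarrow> (\<exists>F c. finite F \<and> F \<subseteq> S \<and> A = comb F c)"
  unfolding cspan_def comb_def by simp

lemma M_comb: "M (comb F c) b' b = (\<Sum>g\<in>F. c g * M g b' b)"
  unfolding M_def comb_def by (simp add: Poly_Mapping.lookup_sum)

lemma good_comb:
  assumes "finite F" "\<forall>g\<in>F. good L LF g"
  shows "good L LF (comb F c)"
proof -
  have "Poly_Mapping.lookup (comb F c v) b' = (\<Sum>b\<in>Poly_Mapping.keys v. Poly_Mapping.lookup v b * M (comb F c) b' b)" for v b'
  proof -
    have "Poly_Mapping.lookup (comb F c v) b' = (\<Sum>g\<in>F. c g * Poly_Mapping.lookup (g v) b')"
      unfolding comb_def by (simp add: Poly_Mapping.lookup_sum)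
    also have "\<dots> = (\<Sum>g\<in>F. c g * (\<Sum>b\<in>Poly_Mapping.keys v. Poly_Mapping.lookup v b * M g b' b))"
      using assms(2) goodD1 by (intro sum.cong refl) metis
    also have "\<dots> = (\<Sum>b\<in>Poly_Mapping.keys v. Poly_Mapping.lookup v b * (\<Sum>g\<in>F. c g * M g b' b))"
      by (simp add: sum_distrib_left sum_distrib_right mult_ac sum.swap[of _ F])
    finally show ?thesis by (simp add: M_comb)
  qed
  moreover have "M (comb F c) b' b = 0" if "b \<notin> Basis L LF" for b b'
    using assms(2) that goodD2 unfolding M_comb by (intro sum.neutral) (metis mult_zero_right)
  ultimately show ?thesis unfolding good_def by blast
qed

lemma diag_comb: "\<forall>g\<in>F. diag g \<Longrightarrow> diag (comb F c)"
  unfolding diag_def M_comb by simp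

lemma diag_lookup:
  assumes "good L LF A" "diag A"
  shows "Poly_Mapping.lookup (A v) b' = Poly_Mapping.lookup v b' * M A b' b'"
proof -
  have "Poly_Mapping.lookup (A v) b' = (\<Sum>b\<in>Poly_Mapping.keys v. Poly_Mapping.lookup v b * M A b' b)"
    using assms(1) by (rule goodD1)
  also have "\<dots> = (\<Sum>b\<in>Poly_Mapping.keys v. if b = b' then Poly_Mapping.lookup v b' * M A b' b' else 0)"
    using diagD[OF assms(2)] by (intro sum.cong refl) auto
  also have "\<dots> = Poly_Mapping.lookup v b' * M A b' b'"
    by (auto simp: in_keys_iff)
  finally show ?thesis .
qed

lemma br_diag:
  assumes "good L LF A" "diag A" "good L LF B" "diag B"
  shows "br A B = (\<lambda>v. 0)"
  unfolding br_def
  by (rule ext, rule poly_mapping_eqI)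
     (simp add: Poly_Mapping.lookup_minus diag_lookup[OF assms(1,2)] diag_lookup[OF assms(3,4)])

lemma lin_ext_ev: "lin_ext L LF f (ev b) = (if b \<in> Basis L LF then f b else 0)"
  unfolding lin_ext_def by (simp add: lookup_ev)

lemma M_lin_ext: "M (lin_ext L LF f) b' b = (if b \<in> Basis L LF then Poly_Mapping.lookup (f b) b' else 0)"
  unfolding M_def lin_ext_ev by simp

lemma good_lin_ext: "good L LF (lin_ext L LF f)"
  unfolding good_def M_lin_ext
  by (auto simp: lin_ext_def Poly_Mapping.lookup_sum intro!: sum.cong)

lemma M_opF: "M (opF L LF l1 l2 I J l3 l4) b' b = (if b \<in> Basis L LF \<and> b = (l2,J,l4) \<and> b' = (l1,I,l3) then 1 else 0)"
  by (cases b) (auto simp: opF_def M_lin_ext lookup_ev)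

lemma M_opL: "M (opL L LF l1 l2 I J) b' (a,K,e) = (if (a,K,e) \<in> Basis L LF \<and> a = l2 then
   (\<Sum>p\<in>{(K1,K2). K1@K2=K}. if fst p = J \<and> b' = (l1, I @ snd p, e) then 1 else 0) else 0)"
  by (auto simp: opL_def M_lin_ext Poly_Mapping.lookup_sum lookup_ev split_def intro!: sum.cong)

lemma M_opR: "M (opR L LF I J l1 l2) b' (a,K,e) = (if (a,K,e) \<in> Basis L LF \<and> e = l2 then
   (\<Sum>p\<in>{(K1,K2). K1@K2=K}. if snd p = J \<and> b' = (a, fst p @ I, l1) then 1 else 0) else 0)"
  by (auto simp: opR_def M_lin_ext Poly_Mapping.lookup_sum lookup_ev split_def intro!: sum.cong)

lemma M_opS: "M (opS L LF I J) b' (a,K,e) = (if (a,K,e) \<in> Basis L LF then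
   (\<Sum>p\<in>{(K1,K2,K3). K1@K2@K3=K}. if fst (snd p) = J \<and> b' = (a, fst p @ I @ snd (snd p), e) then 1 else 0) else 0)"
  by (auto simp: opS_def M_lin_ext Poly_Mapping.lookup_sum lookup_ev split_def intro!: sum.cong)

lemma good_gens: "g \<in> gens L LF \<Longrightarrow> good L LF g"
  unfolding gens_def opF_def opL_def opR_def opS_def by (auto intro: good_lin_ext)

lemma gens00_sub: "gens00 L LF \<subseteq> gens L LF"
  unfolding gens_def gens00_def by blast

lemma diag_opF: "diag (opF L LF l1 l1 I I l2 l2)"
  unfolding diag_def by (auto simp: M_opF)

lemma diag_opL: "diag (opL L LF l l I I)"
  unfolding diag_def
proof (intro allI impI)
  fix b b' :: bas assume ne: "b' \<noteq> b"
  obtain a K e where b: "b = (a,K,e)" by (cases b)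
  show "M (opL L LF l l I I) b' b = 0" unfolding b M_opL using ne b by (auto intro!: sum.neutral)
qed

lemma diag_opR: "diag (opR L LF I I l l)"
  unfolding diag_def
proof (intro allI impI)
  fix b b' :: bas assume ne: "b' \<noteq> b"
  obtain a K e where b: "b = (a,K,e)" by (cases b)
  show "M (opR L LF I I l l) b' b = 0" unfolding b M_opR using ne b by (auto intro!: sum.neutral)
qed

lemma diag_opS: "diag (opS L LF I I)"
  unfolding diag_def
proof (intro allI impI)
  fix b b' :: bas assume ne: "b' \<noteq> b"
  obtain a K e where b: "b = (a,K,e)" by (cases b)
  show "M (opS L LF I I) b' b = 0" unfolding b M_opS using ne b by (auto intro!: sum.neutral)
qed

lemma diag_gens00: "g \<in> gens00 L LF \<Longrightarrow> diag g"
  unfolding gens00_def using diag_opF diag_opL diag_opR diag_opS by blast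

lemma sum_ne0: "(\<Sum>x\<in>S. f x) \<noteq> (0::complex) \<Longrightarrow> \<exists>x\<in>S. f x \<noteq> 0"
  by (meson sum.neutral)

lemma key_gens:
  assumes "g \<in> gens L LF" "M g b b \<noteq> 0"
  shows "g \<in> gens00 L LF"
proof -
  obtain a K e where b: "b = (a,K,e)" by (cases b)
  show ?thesis using assms(1)
    unfolding gens_def
  proof (elim UnE CollectE exE conjE)
    fix l1 l2 l3 l4 I J assume *: "g = opF L LF l1 l2 I J l3 l4" "l1 \<in> {1..LF}" "l2 \<in> {1..LF}" "l3 \<in> {1..LF}" "l4 \<in> {1..LF}" "isseq L I" "isseq L J"
    then have "l1 = l2 \<and> I = J \<and> l3 = l4" using assms(2) by (auto simp: M_opF split: if_splits)
    then show ?thesis using * unfolding gens00_def by blast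
  next
    fix l1 l2 I J assume *: "g = opL L LF l1 l2 I J" "l1 \<in> {1..LF}" "l2 \<in> {1..LF}" "isseq L I" "isseq L J"
    then have "l1 = l2 \<and> I = J" using assms(2) unfolding b
      by (auto simp: M_opL split: if_splits dest!: sum_ne0)
    then show ?thesis using * unfolding gens00_def by blast
  next
    fix l1 l2 I J assume *: "g = opR L LF I J l1 l2" "l1 \<in> {1..LF}" "l2 \<in> {1..LF}" "isseq L I" "isseq L J"
    then have "l1 = l2 \<and> I = J" using assms(2) unfolding b
      by (auto simp: M_opR split: if_splits dest!: sum_ne0)
    then show ?thesis using * unfolding gens00_def by blast
  next
    fix I J assume *: "g = opS L LF I J" "isseq L I" "isseq L J"
    then have "I = J" using assms(2) unfolding b
      by (auto simp: M_opS split: if_splits dest!: sum_ne0)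
    then show ?thesis using * unfolding gens00_def by blast
  qed
qed


lemma zero_cspan: "(\<lambda>v. 0) \<in> cspan S"
  unfolding cspan_iff by (rule exI[of _ "{}"]) (auto simp: comb_def)

lemma comb_single: "comb {g} (\<lambda>_. 1) = g"
  unfolding comb_def by simp

lemma gen_cspan: "g \<in> S \<Longrightarrow> g \<in> cspan S"
  unfolding cspan_iff by (rule exI[of _ "{g}"], rule exI[of _ "\<lambda>_. 1"]) (simp add: comb_single)

lemma cspan_mono: "S \<subseteq> T \<Longrightarrow> cspan S \<subseteq> cspan T"
  unfolding cspan_def by blast

lemma G00_good_diag: "x \<in> G00 L LF \<Longrightarrow> good L LF x \<and> diag x"
proof -
  assume "x \<in> G00 L LF"
  then obtain F c where F: "finite F" "F \<subseteq> gens00 L LF" "x = comb F c"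
    unfolding G00_def cspan_iff by blast
  have "\<forall>g\<in>F. good L LF g" using F(2) gens00_sub good_gens by blast
  moreover have "\<forall>g\<in>F. diag g" using F(2) diag_gens00 by blast
  ultimately show ?thesis using F good_comb diag_comb by simp
qed

lemma Ghat_good: "x \<in> Ghat L LF \<Longrightarrow> good L LF x"
proof -
  assume "x \<in> Ghat L LF"
  then obtain F c where F: "finite F" "F \<subseteq> gens L LF" "x = comb F c"
    unfolding Ghat_def cspan_iff by blast
  have "\<forall>g\<in>F. good L LF g" using F(2) good_gens by blast
  then show ?thesis using F good_comb by simp
qed

lemma br_G00: "x \<in> G00 L LF \<Longrightarrow> y \<in> G00 L LF \<Longrightarrow> br x y = (\<lambda>v. 0)"
  using G00_good_diag[of x] G00_good_diag[of y] br_diag[of L LF x y] by simp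

lemma cspan_zero: "cspan {(\<lambda>v. 0)} = {(\<lambda>v. 0)}"
proof -
  have "comb F c = (\<lambda>v. 0)" if "F \<subseteq> {(\<lambda>v. 0)}" for F c
    using that unfolding comb_def by (intro ext sum.neutral) auto
  note * = this
  show ?thesis
  proof
    show "cspan {(\<lambda>v. 0)} \<subseteq> {(\<lambda>v. 0)}"
    proof
      fix A assume "A \<in> cspan {(\<lambda>v. 0)}"
      then obtain F c where F: "F \<subseteq> {(\<lambda>v. 0)}" "A = comb F c" unfolding cspan_iff by blast
      show "A \<in> {(\<lambda>v. 0)}" using *[OF F(1)] F(2) by simp
    qed
    show "{(\<lambda>v. 0)} \<subseteq> cspan {(\<lambda>v. 0)}" using zero_cspan by simp
  qed
qed

lemma nilp: "lie_nilpotent (G00 L LF)"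
proof -
  have "{br x y | x y. x \<in> G00 L LF \<and> y \<in> lcs (G00 L LF) 0} \<subseteq> {(\<lambda>v. 0)}"
    using br_G00 by auto
  then have "lcs (G00 L LF) 1 \<subseteq> {(\<lambda>v. 0)}"
    using cspan_mono[of _ "{(\<lambda>v. 0)}"] cspan_zero by (simp del: lcs.simps(1))
  moreover have "(\<lambda>v. 0) \<in> lcs (G00 L LF) 1" using zero_cspan by simp
  ultimately show ?thesis unfolding lie_nilpotent_def by blast
qed

lemma proj_in_G00:
  assumes "b \<in> Basis L LF"
  obtains h where "h \<in> G00 L LF" "h (ev b) = ev b" "\<And>w b'. b' \<noteq> b \<Longrightarrow> Poly_Mapping.lookup (h w) b' = 0"
proof -
  obtain l1 I l2 where b: "b = (l1,I,l2)" "l1 \<in> {1..LF}" "l2 \<in> {1..LF}" "isseq L I"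
    using assms unfolding Basis_def by auto
  define h where "h = opF L LF l1 l1 I I l2 l2"
  have "h \<in> {opF L LF l1 l1 I I l2 l2 | l1 l2 I. l1 \<in> {1..LF} \<and> l2 \<in> {1..LF} \<and> isseq L I}"
    unfolding h_def by (rule CollectI, rule exI[of _ l1], rule exI[of _ l2], rule exI[of _ I]) (use b in auto)
  then have hg: "h \<in> gens00 L LF" unfolding gens00_def by (rule UnI1[OF UnI1[OF UnI1]])
  then have hG: "h \<in> G00 L LF" unfolding G00_def by (rule gen_cspan)
  have gd: "good L LF h" "diag h" using G00_good_diag[OF hG] by auto
  have "h (ev b) = ev b"
  proof (rule poly_mapping_eqI)
    fix k
    show "Poly_Mapping.lookup (h (ev b)) k = Poly_Mapping.lookup (ev b) k"
      unfolding diag_lookup[OF gd] unfolding h_def M_opF using b assms by (simp add: lookup_ev)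
  qed
  moreover have "Poly_Mapping.lookup (h w) b' = 0" if "b' \<noteq> b" for w b'
    unfolding diag_lookup[OF gd] unfolding h_def M_opF using that b by simp
  ultimately show ?thesis using that hG by blast
qed

lemma normalizer_sub:
  assumes x: "x \<in> Ghat L LF" and nx: "\<forall>h\<in>G00 L LF. br x h \<in> G00 L LF"
  shows "x \<in> G00 L LF"
proof -
  have gx: "good L LF x" using Ghat_good[OF x] .
  have offd: "M x b' b = 0" if "b' \<noteq> b" for b b'
  proof (cases "b \<in> Basis L LF")
    case False then show ?thesis using goodD2[OF gx] by blast
  next
    case True
    obtain h where h: "h \<in> G00 L LF" "h (ev b) = ev b" "\<And>w b'. b' \<noteq> b \<Longrightarrow> Poly_Mapping.lookup (h w) b' = 0"
      using proj_in_G00[OF True] by blast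
    have "diag (br x h)" using G00_good_diag nx h(1) by blast
    then have "M (br x h) b' b = 0" using that diagD by blast
    moreover have "M (br x h) b' b = M x b' b"
      unfolding M_def br_def using h(2) h(3)[OF that] by (simp add: Poly_Mapping.lookup_minus)
    ultimately show ?thesis by simp
  qed
  obtain F c where F: "finite F" "F \<subseteq> gens L LF" "x = comb F c"
    using x unfolding Ghat_def cspan_iff by blast
  define F0 where "F0 = F \<inter> gens00 L LF"
  have yG: "comb F0 c \<in> G00 L LF" unfolding G00_def cspan_iff F0_def using F by blast
  have gy: "good L LF (comb F0 c)" "diag (comb F0 c)" using G00_good_diag[OF yG] by auto
  have Meq: "M x b' b = M (comb F0 c) b' b" for b b'
  proof (cases "b' = b")
    case False then show ?thesis using offd diagD[OF gy(2)] by simp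
  next
    case True
    have "M x b b = (\<Sum>g\<in>F. c g * M g b b)" using F(3) M_comb by simp
    also have "\<dots> = (\<Sum>g\<in>F0. c g * M g b b)"
    proof (rule sum.mono_neutral_right)
      show "finite F" by fact
      show "F0 \<subseteq> F" unfolding F0_def by blast
      show "\<forall>g\<in>F - F0. c g * M g b b = 0"
      proof
        fix g assume g: "g \<in> F - F0"
        then have "g \<in> gens L LF" "g \<notin> gens00 L LF" using F(2) unfolding F0_def by auto
        then have "M g b b = 0" using key_gens by blast
        then show "c g * M g b b = 0" by simp
      qed
    qed
    also have "\<dots> = M (comb F0 c) b b" by (simp add: M_comb)
    finally show ?thesis using True by simp
  qed
  have "x = comb F0 c"
    by (intro ext poly_mapping_eqI) (simp add: goodD1[OF gx] goodD1[OF gy(1)] Meq)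
  then show ?thesis using yG by simp
qed


lemma finite_splits: "finite {(K1,K2). K1 @ K2 = (K::nat list)}"
proof (rule finite_subset)
  show "{(K1,K2). K1 @ K2 = K} \<subseteq> (\<lambda>n. (take n K, drop n K)) ` {..length K}"
  proof
    fix p assume "p \<in> {(K1,K2). K1 @ K2 = K}"
    then obtain K1 K2 where p: "p = (K1,K2)" "K1 @ K2 = K" by blast
    then show "p \<in> (\<lambda>n. (take n K, drop n K)) ` {..length K}"
      by (intro image_eqI[of _ _ "length K1"]) auto
  qed
qed simp

lemma M_opL_diag: "M (opL L LF l l I I) (a,K,e) (a,K,e) =
   (if (a,K,e) \<in> Basis L LF \<and> a = l \<and> take (length I) K = I then 1 else 0)"
proof -
  have "(\<Sum>p\<in>{(K1,K2). K1@K2=K}. if fst p = I \<and> (a,K,e) = (l, I @ snd p, e) then 1 else 0)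
      = (\<Sum>p\<in>{(K1,K2). K1@K2=K}. if p = (I, drop (length I) K) then (if a = l then 1 else 0) else (0::complex))"
  proof (intro sum.cong refl)
    fix p assume "p \<in> {(K1,K2). K1@K2=K}"
    then obtain K1 K2 where p: "p = (K1,K2)" "K = K1 @ K2" by auto
    have "K1 = I \<longleftrightarrow> (K1 = I \<and> K2 = drop (length I) K)" using p(2) by auto
    then show "(if fst p = I \<and> (a,K,e) = (l, I @ snd p, e) then 1 else 0)
      = (if p = (I, drop (length I) K) then (if a = l then 1 else 0) else (0::complex))"
      unfolding p(1) using p(2) by auto
  qed
  also have "\<dots> = (if (I, drop (length I) K) \<in> {(K1,K2). K1@K2=K} then (if a = l then 1 else 0) else 0)"
    using finite_splits[of K] by (rule sum.delta)
  also have "(I, drop (length I) K) \<in> {(K1,K2). K1@K2=K} \<longleftrightarrow> take (length I) K = I"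
    by (metis (mono_tags, lifting) append_eq_conv_conj case_prod_conv mem_Collect_eq)
  finally show ?thesis unfolding M_opL by auto
qed

lemma take1: "take (Suc 0) K = [i] \<longleftrightarrow> K \<noteq> [] \<and> hd K = i"
  by (cases K) auto

lemma lin_dep: assumes "L > 0" "LF > 0" shows "lin_dependent (gens00 L LF)"
proof -
  define A where "A = opL L LF 1 1 [] []"
  define B where "B = (\<lambda>i. opL L LF 1 1 [i] [i])"
  define C where "C = (\<lambda>l. opF L LF 1 1 [] [] l l)"
  have MA: "M A (a,K,e) (a,K,e) = (if (a,K,e) \<in> Basis L LF \<and> a = 1 then 1 else 0)" for a K e
    unfolding A_def using M_opL_diag[of L LF 1 "[]" a K e] by simp
  have MB: "M (B i) (a,K,e) (a,K,e) = (if (a,K,e) \<in> Basis L LF \<and> a = 1 \<and> K \<noteq> [] \<and> hd K = i then 1 else 0)" for i a K e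
    unfolding B_def using M_opL_diag[of L LF 1 "[i]" a K e] by (simp add: take1)
  have MC: "M (C l) (a,K,e) (a,K,e) = (if (a,K,e) \<in> Basis L LF \<and> a = 1 \<and> K = [] \<and> e = l then 1 else 0)" for l a K e
    unfolding C_def M_opF by auto
  have bas1: "(1, [i], l) \<in> Basis L LF" if "i \<in> {1..L}" "l \<in> {1..LF}" for i l
    using that assms unfolding Basis_def isseq_def by auto
  have bas0: "(1, [], l) \<in> Basis L LF" if "l \<in> {1..LF}" for l
    using that assms unfolding Basis_def isseq_def by auto
  have one: "(1::nat) \<in> {1..L}" "(1::nat) \<in> {1..LF}" using assms by auto
  have injB: "inj_on B {1..L}"
  proof (rule inj_onI)
    fix i j assume ij: "i \<in> {1..L}" "j \<in> {1..L}" "B i = B j"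
    have "M (B i) (1,[i],1) (1,[i],1) = M (B j) (1,[i],1) (1,[i],1)" using ij by simp
    then show "i = j" using bas1[OF ij(1) one(2)] unfolding MB by (auto split: if_splits)
  qed
  have injC: "inj_on C {1..LF}"
  proof (rule inj_onI)
    fix i j assume ij: "i \<in> {1..LF}" "j \<in> {1..LF}" "C i = C j"
    have "M (C i) (1,[],i) (1,[],i) = M (C j) (1,[],i) (1,[],i)" using ij by simp
    then show "i = j" using bas0[OF ij(1)] unfolding MC by (auto split: if_splits)
  qed
  have AB: "A \<notin> B ` {1..L}"
  proof
    assume "A \<in> B ` {1..L}" then obtain i where "A = B i" by blast
    then have "M A (1,[],1) (1,[],1) = M (B i) (1,[],1) (1,[],1)" by simp
    then show False using bas0[OF one(2)] unfolding MA MB by simp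
  qed
  have AC: "A \<notin> C ` {1..LF}"
  proof
    assume "A \<in> C ` {1..LF}" then obtain l where "A = C l" by blast
    then have "M A (1,[1],1) (1,[1],1) = M (C l) (1,[1],1) (1,[1],1)" by simp
    then show False using bas1[OF one] unfolding MA MC by simp
  qed
  have BC: "B ` {1..L} \<inter> C ` {1..LF} = {}"
  proof (rule ccontr)
    assume "B ` {1..L} \<inter> C ` {1..LF} \<noteq> {}"
    then obtain i l where il: "l \<in> {1..LF}" "B i = C l" by blast
    then have "M (B i) (1,[],l) (1,[],l) = M (C l) (1,[],l) (1,[],l)" by simp
    then show False using bas0[OF il(1)] unfolding MB MC by simp
  qed
  define F where "F = insert A (B ` {1..L} \<union> C ` {1..LF})"
  define c where "c = (\<lambda>g. if g = A then (1::complex) else -1)"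
  have finF: "finite F" unfolding F_def by simp
  have FG: "F \<subseteq> gens00 L LF"
  proof -
    have "A \<in> {opL L LF l l I I |l I. l \<in> {1..LF} \<and> isseq L I}"
      unfolding A_def isseq_def by (rule CollectI, rule exI[of _ "1::nat"], rule exI[of _ "[]"]) (use one in auto)
    then have "A \<in> gens00 L LF" unfolding gens00_def by (rule UnI1[OF UnI1[OF UnI2]])
    moreover have "B i \<in> gens00 L LF" if "i \<in> {1..L}" for i
    proof -
      have "B i \<in> {opL L LF l l I I |l I. l \<in> {1..LF} \<and> isseq L I}"
        unfolding B_def isseq_def by (rule CollectI, rule exI[of _ "1::nat"], rule exI[of _ "[i]"]) (use one that in auto)
      then show ?thesis unfolding gens00_def by (rule UnI1[OF UnI1[OF UnI2]])
    qed
    moreover have "C l \<in> gens00 L LF" if "l \<in> {1..LF}" for l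
    proof -
      have "C l \<in> {opF L LF l1 l1 I I l2 l2 | l1 l2 I. l1 \<in> {1..LF} \<and> l2 \<in> {1..LF} \<and> isseq L I}"
        unfolding C_def isseq_def by (rule CollectI, rule exI[of _ "1::nat"], rule exI[of _ l], rule exI[of _ "[]"]) (use one that in auto)
      then show ?thesis unfolding gens00_def by (rule UnI1[OF UnI1[OF UnI1]])
    qed
    ultimately show ?thesis unfolding F_def by blast
  qed
  have gd: "good L LF (comb F c)" "diag (comb F c)"
    using G00_good_diag[of "comb F c" L LF] finF FG unfolding G00_def cspan_iff by blast+
  have Mz: "M (comb F c) b' b = 0" for b b'
  proof (cases "b' = b")
    case False then show ?thesis using diagD[OF gd(2)] by blast
  next
    case True
    show ?thesis
    proof (cases "b \<in> Basis L LF")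
      case False then show ?thesis using goodD2[OF gd(1)] by blast
    next
      case bB: True
      obtain a K e where b: "b = (a,K,e)" by (cases b)
      have Kseq: "K \<noteq> [] \<Longrightarrow> hd K \<in> {1..L}" using bB unfolding b Basis_def isseq_def
        by (auto dest!: hd_in_set)
      have eF: "e \<in> {1..LF}" using bB unfolding b Basis_def by auto
      have "M (comb F c) b b = c A * M A b b + (\<Sum>g\<in>B ` {1..L} \<union> C ` {1..LF}. c g * M g b b)"
        unfolding M_comb F_def using AB AC by (subst sum.insert) auto
      also have "(\<Sum>g\<in>B ` {1..L} \<union> C ` {1..LF}. c g * M g b b)
          = (\<Sum>g\<in>B ` {1..L}. c g * M g b b) + (\<Sum>g\<in>C ` {1..LF}. c g * M g b b)"
        using BC by (intro sum.union_disjoint) auto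
      also have "(\<Sum>g\<in>B ` {1..L}. c g * M g b b) = (\<Sum>i\<in>{1..L}. - M (B i) b b)"
        using injB AB unfolding c_def by (subst sum.reindex) (auto intro!: sum.cong)
      also have "(\<Sum>g\<in>C ` {1..LF}. c g * M g b b) = (\<Sum>l\<in>{1..LF}. - M (C l) b b)"
        using injC AC unfolding c_def by (subst sum.reindex) (auto intro!: sum.cong)
      also have "(\<Sum>i\<in>{1..L}. - M (B i) b b) = - (if a = 1 \<and> K \<noteq> [] then 1 else 0)"
      proof -
        have "(\<Sum>i\<in>{1..L}. M (B i) b b) = (\<Sum>i\<in>{1..L}. if i = hd K then (if a = 1 \<and> K \<noteq> [] then 1 else 0) else 0)"
          unfolding b MB using bB b by (intro sum.cong refl) auto
        also have "\<dots> = (if a = 1 \<and> K \<noteq> [] then 1 else 0)"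
          using Kseq by (auto simp: sum.delta)
        finally show ?thesis by (simp add: sum_negf)
      qed
      also have "(\<Sum>l\<in>{1..LF}. - M (C l) b b) = - (if a = 1 \<and> K = [] then 1 else 0)"
      proof -
        have "(\<Sum>l\<in>{1..LF}. M (C l) b b) = (\<Sum>l\<in>{1..LF}. if l = e then (if a = 1 \<and> K = [] then 1 else 0) else 0)"
          unfolding b MC using bB b by (intro sum.cong refl) auto
        also have "\<dots> = (if a = 1 \<and> K = [] then 1 else 0)"
          using eF by (auto simp: sum.delta)
        finally show ?thesis by (simp add: sum_negf)
      qed
      finally show ?thesis using True bB unfolding b MA c_def by auto
    qed
  qed
  have "comb F c = (\<lambda>v. 0)"
    by (intro ext poly_mapping_eqI) (simp add: goodD1[OF gd(1)] Mz)
  moreover have "\<exists>g\<in>F. c g \<noteq> 0" unfolding F_def c_def by simp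
  ultimately show ?thesis unfolding lin_dependent_def comb_def using finF FG by blast
qed

theorem proposition3:
  fixes L LF :: nat
  assumes "L > 0" and "LF > 0"
  shows "G00 L LF \<subseteq> Ghat L LF
    \<and> (\<forall>x\<in>G00 L LF. \<forall>y\<in>G00 L LF. br x y \<in> G00 L LF)
    \<and> lie_nilpotent (G00 L LF)
    \<and> normalizer (Ghat L LF) (G00 L LF) = G00 L LF
    \<and> lin_dependent (gens00 L LF)"
proof (intro conjI)
  show sub: "G00 L LF \<subseteq> Ghat L LF"
    unfolding G00_def Ghat_def by (rule cspan_mono[OF gens00_sub])
  show "\<forall>x\<in>G00 L LF. \<forall>y\<in>G00 L LF. br x y \<in> G00 L LF"
    using br_G00 zero_cspan unfolding G00_def by metis
  show "lie_nilpotent (G00 L LF)" by (rule nilp)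
  show "normalizer (Ghat L LF) (G00 L LF) = G00 L LF"
  proof
    show "normalizer (Ghat L LF) (G00 L LF) \<subseteq> G00 L LF"
      unfolding normalizer_def using normalizer_sub by blast
    show "G00 L LF \<subseteq> normalizer (Ghat L LF) (G00 L LF)"
      unfolding normalizer_def using sub br_G00 zero_cspan[of "gens00 L LF"]
      unfolding G00_def by auto
  qed
  show "lin_dependent (gens00 L LF)" using lin_dep assms by blast
qed

end
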